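(* Let $A$ be a nonempty finite set of $n$ alternatives. A choice rule $C$ on $A$ is (capacity-constrained) lexicographic if and only if it satisfies capacity-filling, gross substitutes, monotonicity, and the capacity-wise weak axiom of revealed preference (CWARP).
   Context: Let $\mathcal{A}$ be the set of all nonempty subsets of $A$. A choice rule is a map $C$ assigning to each $(S,q)\in\mathcal{A}\times\{1,\dots,n\}$ a nonempty set $C(S,q)\subseteq S$ with $|C(S,q)|\le q$; write $R(S,q)=S\setminus C(S,q)$. A priority ordering is a complete, transitive, antisymmetric binary relation on $A$; a priority profile is a list $(\succ_1,\dots,\succ_n)$ of $n$ priority orderings. $C$ is lexicographic for $(\succ_1,\dots,\succ_n)$ if for every $(S,q)$, $C(S,q)$ is obtained by choosing the $\succ_1$-highest alternative in $S$, then the $\succ_2$-highest among the remaining ones, and so on, until $q$ alternatives are chosen or none is left; $C$ is lexicographic if it is lexicographic for some priority profile. Capacity-filling: $|C(S,q)|=\min\{|S|,q\}$ for all $(S,q)$. Gross substitutes: for each $(S,q)$ and $a,b\in S$ with $a\ne b$, $a\in C(S,q)$ implies $a\in C(S\setminus\{b\},q)$. Monotonicity: $C(S,q)\subseteq C(S,q+1)$ for all $S\in\mathcal{A}$, $q\in\{1,\dots,n-1\}$. For $q\in\{2,\dots,n\}$, $a$ is revealed to be preferred to $b$ at $q$ if there is $S\in\mathcal{A}$ with $a,b\notin C(S,q-1)$, $a\in C(S,q)$ and $b\in R(S,q)$. CWARP: for each $q\in\{2,\dots,n\}$ and $a,b\in A$, if $a$ is revealed to be preferred to $b$ at $q$ then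 $b$ is not revealed to be preferred to $a$ at $q$. *)

theory Defs
  imports Main
begin

definition choice_rule :: "'a set \<Rightarrow> ('a set \<Rightarrow> nat \<Rightarrow> 'a set) \<Rightarrow> bool" where
  "choice_rule A C \<longleftrightarrow>
     (\<forall>S q. S \<subseteq> A \<and> S \<noteq> {} \<and> 1 \<le> q \<and> q \<le> card A \<longrightarrow>
        C S q \<noteq> {} \<and> C S q \<subseteq> S \<and> card (C S q) \<le> q)"

text \<open>A priority ordering on A: a complete, transitive, antisymmetric (hence reflexive)
  relation; (a,b) \<in> r means a has priority at least as high as b.\<close>
definition priority_ordering :: "'a set \<Rightarrow> 'a rel \<Rightarrow> bool" where
  "priority_ordering A r \<longleftrightarrow> r \<subseteq> A \<times> A \<and> linear_order_on A r"

definition top_of :: "'a rel \<Rightarrow> 'a set \<Rightarrow> 'a" where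
  "top_of r S = (THE a. a \<in> S \<and> (\<forall>b\<in>S. (a, b) \<in> r))"

fun lex_pick :: "'a rel list \<Rightarrow> 'a set \<Rightarrow> 'a set" where
  "lex_pick [] S = {}"
| "lex_pick (r # rs) S =
     (if S = {} then {} else insert (top_of r S) (lex_pick rs (S - {top_of r S})))"

definition lexicographic_for :: "'a set \<Rightarrow> ('a set \<Rightarrow> nat \<Rightarrow> 'a set) \<Rightarrow> 'a rel list \<Rightarrow> bool" where
  "lexicographic_for A C P \<longleftrightarrow>
     length P = card A \<and> (\<forall>r\<in>set P. priority_ordering A r) \<and>
     (\<forall>S q. S \<subseteq> A \<and> S \<noteq> {} \<and> 1 \<le> q \<and> q \<le> card A \<longrightarrow> C S q = lex_pick (take q P) S)"

definition lexicographic :: "'a set \<Rightarrow> ('a set \<Rightarrow> nat \<Rightarrow> 'a set) \<Rightarrow> bool" where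
  "lexicographic A C \<longleftrightarrow> (\<exists>P. lexicographic_for A C P)"

definition capacity_filling :: "'a set \<Rightarrow> ('a set \<Rightarrow> nat \<Rightarrow> 'a set) \<Rightarrow> bool" where
  "capacity_filling A C \<longleftrightarrow>
     (\<forall>S q. S \<subseteq> A \<and> S \<noteq> {} \<and> 1 \<le> q \<and> q \<le> card A \<longrightarrow> card (C S q) = min (card S) q)"

definition gross_substitutes :: "'a set \<Rightarrow> ('a set \<Rightarrow> nat \<Rightarrow> 'a set) \<Rightarrow> bool" where
  "gross_substitutes A C \<longleftrightarrow>
     (\<forall>S q a b. S \<subseteq> A \<and> S \<noteq> {} \<and> 1 \<le> q \<and> q \<le> card A \<and> a \<in> S \<and> b \<in> S \<and> a \<noteq> b
        \<and> a \<in> C S q \<longrightarrow> a \<in> C (S - {b}) q)"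

definition monotonic :: "'a set \<Rightarrow> ('a set \<Rightarrow> nat \<Rightarrow> 'a set) \<Rightarrow> bool" where
  "monotonic A C \<longleftrightarrow>
     (\<forall>S q. S \<subseteq> A \<and> S \<noteq> {} \<and> 1 \<le> q \<and> q \<le> card A - 1 \<longrightarrow> C S q \<subseteq> C S (q + 1))"

definition revealed_pref :: "'a set \<Rightarrow> ('a set \<Rightarrow> nat \<Rightarrow> 'a set) \<Rightarrow> nat \<Rightarrow> 'a \<Rightarrow> 'a \<Rightarrow> bool" where
  "revealed_pref A C q a b \<longleftrightarrow>
     (\<exists>S. S \<subseteq> A \<and> S \<noteq> {} \<and> a \<notin> C S (q - 1) \<and> b \<notin> C S (q - 1)
          \<and> a \<in> C S q \<and> b \<in> S - C S q)"

definition CWARP :: "'a set \<Rightarrow> ('a set \<Rightarrow> nat \<Rightarrow> 'a set) \<Rightarrow> bool" where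
  "CWARP A C \<longleftrightarrow>
     (\<forall>q a b. 2 \<le> q \<and> q \<le> card A \<and> a \<in> A \<and> b \<in> A \<and> revealed_pref A C q a b
        \<longrightarrow> \<not> revealed_pref A C q b a)"

end

theory Submission
  imports Defs
begin


lemma po_facts:
  assumes "priority_ordering A r"
  shows "r \<subseteq> A \<times> A" "refl_on A r" "trans r" "antisym r" "total_on A r"
  using assms unfolding priority_ordering_def linear_order_on_def partial_order_on_def preorder_on_def
  by auto

lemma top_exists:
  assumes po: "priority_ordering A r" and fin: "finite S" and ne: "S \<noteq> {}" and sub: "S \<subseteq> A"
  shows "\<exists>t\<in>S. \<forall>b\<in>S. (t, b) \<in> r"
  using fin ne sub
proof (induction S rule: finite_ne_induct)
  case (singleton x)
  then show ?case using po_facts(2)[OF po] by (auto simp: refl_on_def)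
next
  case (insert x F)
  then obtain t where t: "t \<in> F" "\<forall>b\<in>F. (t, b) \<in> r" by auto
  have xA: "x \<in> A" and tA: "t \<in> A" using insert t by auto
  have xt: "x \<noteq> t" using t insert by auto
  show ?case
  proof (cases "(x, t) \<in> r")
    case True
    have "\<forall>b\<in>insert x F. (x, b) \<in> r"
      using True t po_facts(2,3)[OF po] xA unfolding refl_on_def trans_def by blast
    then show ?thesis by blast
  next
    case False
    then have "(t, x) \<in> r" using po_facts(5)[OF po] xA tA xt unfolding total_on_def by blast
    then show ?thesis using t by blast
  qed
qed

lemma top_unique:
  assumes po: "priority_ordering A r" and sub: "S \<subseteq> A" and t: "t \<in> S" "\<forall>b\<in>S. (t, b) \<in> r"
  shows "top_of r S = t"
  unfolding top_of_def
proof (rule the_equality)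
  show "t \<in> S \<and> (\<forall>b\<in>S. (t, b) \<in> r)" using t by blast
next
  fix a assume "a \<in> S \<and> (\<forall>b\<in>S. (a, b) \<in> r)"
  then show "a = t" using t po_facts(4)[OF po] unfolding antisym_def by blast
qed

lemma top_props:
  assumes po: "priority_ordering A r" and fin: "finite S" and ne: "S \<noteq> {}" and sub: "S \<subseteq> A"
  shows "top_of r S \<in> S" "\<forall>b\<in>S. (top_of r S, b) \<in> r"
proof -
  obtain t where t: "t \<in> S" "\<forall>b\<in>S. (t, b) \<in> r" using top_exists[OF assms] by blast
  have "top_of r S = t" using top_unique[OF po sub t] .
  then show "top_of r S \<in> S" "\<forall>b\<in>S. (top_of r S, b) \<in> r" using t by auto
qed

definition po_list :: "'a set \<Rightarrow> 'a rel list \<Rightarrow> bool" where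
  "po_list A rs \<longleftrightarrow> (\<forall>r\<in>set rs. priority_ordering A r)"

lemma lex_pick_subset:
  assumes "po_list A rs" "finite A" "S \<subseteq> A"
  shows "lex_pick rs S \<subseteq> S"
  using assms
proof (induction rs arbitrary: S)
  case Nil then show ?case by simp
next
  case (Cons r rs)
  have po: "priority_ordering A r" and pl: "po_list A rs" using Cons.prems by (auto simp: po_list_def)
  show ?case
  proof (cases "S = {}")
    case True then show ?thesis by simp
  next
    case False
    have fin: "finite S" using Cons.prems finite_subset by blast
    have "top_of r S \<in> S" using top_props(1)[OF po fin False Cons.prems(3)] .
    moreover have "lex_pick rs (S - {top_of r S}) \<subseteq> S - {top_of r S}"
      using Cons.IH[OF pl Cons.prems(2)] Cons.prems(3) by blast
    ultimately show ?thesis using False by auto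
  qed
qed

lemma lex_pick_card:
  assumes "po_list A rs" "finite A" "S \<subseteq> A"
  shows "card (lex_pick rs S) = min (card S) (length rs)"
  using assms
proof (induction rs arbitrary: S)
  case Nil then show ?case by simp
next
  case (Cons r rs)
  have po: "priority_ordering A r" and pl: "po_list A rs" using Cons.prems by (auto simp: po_list_def)
  show ?case
  proof (cases "S = {}")
    case True then show ?thesis by simp
  next
    case False
    have fin: "finite S" using Cons.prems finite_subset by blast
    define t where "t = top_of r S"
    have tS: "t \<in> S" using top_props(1)[OF po fin False Cons.prems(3)] t_def by simp
    have sub: "lex_pick rs (S - {t}) \<subseteq> S - {t}"
      using lex_pick_subset[OF pl Cons.prems(2)] Cons.prems(3) by blast
    have c1: "card (lex_pick rs (S - {t})) = min (card (S - {t})) (length rs)"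
      using Cons.IH[OF pl Cons.prems(2)] Cons.prems(3) by blast
    have fin2: "finite (lex_pick rs (S - {t}))" using sub fin finite_subset by blast
    have "card (lex_pick (r # rs) S) = Suc (card (lex_pick rs (S - {t})))"
    proof -
      have "t \<notin> lex_pick rs (S - {t})" using sub by blast
      then show ?thesis using False fin2 by (simp add: t_def[symmetric])
    qed
    also have "\<dots> = min (card S) (length (r # rs))"
    proof -
      have "card (S - {t}) = card S - 1" using fin tS by simp
      moreover have "card S > 0" using fin False card_gt_0_iff by blast
      ultimately show ?thesis using c1 by (cases "card S") auto
    qed
    finally show ?thesis .
  qed
qed

lemma lex_pick_prefix: "lex_pick rs S \<subseteq> lex_pick (rs @ ys) S"
proof (induction rs arbitrary: S)
  case Nil then show ?case by simp
next
  case (Cons r rs) then show ?case by auto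
qed

lemma lex_pick_snoc:
  "lex_pick (xs @ [r]) S = lex_pick xs S \<union>
     (if S - lex_pick xs S = {} then {} else {top_of r (S - lex_pick xs S)})"
proof (induction xs arbitrary: S)
  case Nil then show ?case by simp
next
  case (Cons r' xs)
  show ?case
  proof (cases "S = {}")
    case True then show ?thesis by simp
  next
    case False
    define t where "t = top_of r' S"
    have eq: "S - lex_pick (r' # xs) S = (S - {t}) - lex_pick xs (S - {t})"
      using False by (auto simp: t_def[symmetric])
    have "lex_pick ((r' # xs) @ [r]) S = insert t (lex_pick (xs @ [r]) (S - {t}))"
      using False by (simp add: t_def)
    also have "\<dots> = insert t (lex_pick xs (S - {t}) \<union>
       (if (S - {t}) - lex_pick xs (S - {t}) = {} then {} else {top_of r ((S - {t}) - lex_pick xs (S - {t}))}))"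
      using Cons.IH by simp
    also have "\<dots> = lex_pick (r' # xs) S \<union>
     (if S - lex_pick (r' # xs) S = {} then {} else {top_of r (S - lex_pick (r' # xs) S)})"
      unfolding eq using False by (simp add: t_def)
    finally show ?thesis .
  qed
qed

lemma lex_pick_gs:
  assumes "po_list A rs" "finite A" "S \<subseteq> A"
    and "a \<in> lex_pick rs S" "b \<in> S" "a \<noteq> b"
  shows "a \<in> lex_pick rs (S - {b})"
  using assms
proof (induction rs arbitrary: S b)
  case Nil then show ?case by simp
next
  case (Cons r rs)
  have po: "priority_ordering A r" and pl: "po_list A rs" using Cons.prems(1) by (auto simp: po_list_def)
  have SA: "S \<subseteq> A" using Cons.prems(3) .
  have Sne: "S \<noteq> {}" using Cons.prems(5) by blast
  have fin: "finite S" using Cons.prems(2) SA finite_subset by blast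
  define t where "t = top_of r S"
  have tS: "t \<in> S" and ttop: "\<forall>x\<in>S. (t, x) \<in> r"
    using top_props[OF po fin Sne SA] unfolding t_def by auto
  have aL: "a = t \<or> a \<in> lex_pick rs (S - {t})" using Cons.prems(4) Sne by (simp add: t_def[symmetric])
  have IH: "\<And>S' b'. S' \<subseteq> A \<Longrightarrow> a \<in> lex_pick rs S' \<Longrightarrow> b' \<in> S' \<Longrightarrow> a \<noteq> b' \<Longrightarrow> a \<in> lex_pick rs (S' - {b'})"
    using Cons.IH[OF pl Cons.prems(2)] by blast
  show ?case
  proof (cases "b = t")
    case False
    have sub2: "S - {b} \<subseteq> A" using SA by blast
    have t2: "top_of r (S - {b}) = t"
      using top_unique[OF po sub2, of t] tS ttop False by blast
    have ne2: "S - {b} \<noteq> {}" using tS False by blast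
    have eq: "lex_pick (r # rs) (S - {b}) = insert t (lex_pick rs (S - {b} - {t}))"
      using ne2 t2 by simp
    have "a = t \<or> a \<in> lex_pick rs (S - {t} - {b})"
    proof (cases "a = t")
      case False
      then have "a \<in> lex_pick rs (S - {t})" using aL by blast
      moreover have "S - {t} \<subseteq> A" using SA by blast
      moreover have "b \<in> S - {t}" using Cons.prems(5) \<open>b \<noteq> t\<close> by blast
      ultimately show ?thesis using IH Cons.prems(6) by blast
    qed simp
    moreover have "S - {t} - {b} = S - {b} - {t}" by blast
    ultimately show ?thesis using eq by simp
  next
    case True
    have at: "a \<noteq> t" using True Cons.prems(6) by blast
    then have a1: "a \<in> lex_pick rs (S - {t})" using aL by blast
    have sub2: "S - {t} \<subseteq> A" using SA by blast
    have aS: "a \<in> S - {t}" using lex_pick_subset[OF pl Cons.prems(2) sub2] a1 by blast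
    have ne2: "S - {t} \<noteq> {}" using aS by blast
    have fin2: "finite (S - {t})" using fin by simp
    define t' where "t' = top_of r (S - {t})"
    have t'S: "t' \<in> S - {t}" using top_props(1)[OF po fin2 ne2 sub2] unfolding t'_def .
    have eq: "lex_pick (r # rs) (S - {t}) = insert t' (lex_pick rs (S - {t} - {t'}))"
      using ne2 by (simp add: t'_def[symmetric])
    have "a = t' \<or> a \<in> lex_pick rs (S - {t} - {t'})"
    proof (cases "a = t'")
      case False
      then show ?thesis using IH[OF sub2 a1 t'S] by blast
    qed simp
    then show ?thesis using True eq by auto
  qed
qed



lemma lexfor_step:
  assumes fin: "finite A" and lf: "lexicographic_for A C P"
    and S: "S \<subseteq> A" "S \<noteq> {}" and q: "2 \<le> q" "q \<le> card A"
    and x: "x \<notin> C S (q - 1)" "x \<in> C S q" and y: "y \<in> S" "y \<notin> C S q"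
  shows "(x, y) \<in> P ! (q - 1)"
proof -
  have len: "length P = card A" and po: "\<forall>r\<in>set P. priority_ordering A r"
    and eqC: "\<And>S q. S \<subseteq> A \<Longrightarrow> S \<noteq> {} \<Longrightarrow> 1 \<le> q \<Longrightarrow> q \<le> card A \<Longrightarrow> C S q = lex_pick (take q P) S"
    using lf unfolding lexicographic_for_def by auto
  define r where "r = P ! (q - 1)"
  have rin: "r \<in> set P" using len q unfolding r_def by simp
  then have por: "priority_ordering A r" using po by blast
  have tk: "take q P = take (q - 1) P @ [r]"
  proof -
    have "q - 1 < length P" using q len by simp
    then have "take (Suc (q - 1)) P = take (q - 1) P @ [r]" unfolding r_def by (rule take_Suc_conv_app_nth)
    moreover have "Suc (q - 1) = q" using q by simp
    ultimately show ?thesis by simp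
  qed
  define L where "L = C S (q - 1)"
  have L: "L = lex_pick (take (q - 1) P) S" using eqC[OF S, of "q - 1"] q unfolding L_def by simp
  have Cq: "C S q = L \<union> (if S - L = {} then {} else {top_of r (S - L)})"
  proof -
    have "C S q = lex_pick (take (q - 1) P @ [r]) S" using eqC[OF S, of q] q tk by simp
    then show ?thesis unfolding lex_pick_snoc L[symmetric] .
  qed
  have ne: "S - L \<noteq> {}" and xt: "x = top_of r (S - L)" using x Cq unfolding L_def[symmetric]
    by (auto split: if_splits)
  have yL: "y \<in> S - L" using y Cq by auto
  have "finite (S - L)" using fin S finite_subset by blast
  then have "\<forall>b\<in>S - L. (top_of r (S - L), b) \<in> r" using top_props(2)[OF por _ ne] S by blast
  then show ?thesis using yL xt unfolding r_def by blast
qed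

lemma lex_imp_axioms:
  assumes fin: "finite A" and ne: "A \<noteq> {}" and cr: "choice_rule A C" and lf: "lexicographic_for A C P"
  shows "capacity_filling A C \<and> gross_substitutes A C \<and> monotonic A C \<and> CWARP A C"
proof -
  have len: "length P = card A" and po: "\<forall>r\<in>set P. priority_ordering A r"
    and eqC: "\<And>S q. S \<subseteq> A \<Longrightarrow> S \<noteq> {} \<Longrightarrow> 1 \<le> q \<Longrightarrow> q \<le> card A \<Longrightarrow> C S q = lex_pick (take q P) S"
    using lf unfolding lexicographic_for_def by auto
  have pl: "\<And>k. po_list A (take k P)" unfolding po_list_def using po by (auto dest: in_set_takeD)
  have CF: "capacity_filling A C"
    unfolding capacity_filling_def
  proof (intro allI impI)
    fix S q assume h: "S \<subseteq> A \<and> S \<noteq> {} \<and> 1 \<le> q \<and> q \<le> card A"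
    then show "card (C S q) = min (card S) q"
      using eqC lex_pick_card[OF pl fin] len by simp
  qed
  have GS: "gross_substitutes A C"
    unfolding gross_substitutes_def
  proof (intro allI impI)
    fix S q a b assume h: "S \<subseteq> A \<and> S \<noteq> {} \<and> 1 \<le> q \<and> q \<le> card A \<and> a \<in> S \<and> b \<in> S \<and> a \<noteq> b \<and> a \<in> C S q"
    have "S - {b} \<subseteq> A" "S - {b} \<noteq> {}" using h by auto
    then have "C (S - {b}) q = lex_pick (take q P) (S - {b})" using eqC h by blast
    moreover have "a \<in> lex_pick (take q P) S" using h eqC[of S q] by simp
    ultimately show "a \<in> C (S - {b}) q" using lex_pick_gs[OF pl fin] h by simp
  qed
  have MO: "monotonic A C"
    unfolding monotonic_def
  proof (intro allI impI)
    fix S q assume h: "S \<subseteq> A \<and> S \<noteq> {} \<and> 1 \<le> q \<and> q \<le> card A - 1"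
    have "take (q + 1) P = take q P @ take 1 (drop q P)" by (rule take_add)
    then have "lex_pick (take q P) S \<subseteq> lex_pick (take (q + 1) P) S" using lex_pick_prefix[of "take q P" S "take 1 (drop q P)"] by simp
    moreover have q1: "q + 1 \<le> card A" using h by arith
    moreover have "C S q = lex_pick (take q P) S" using h q1 eqC[of S q] by simp
    moreover have "C S (q + 1) = lex_pick (take (q + 1) P) S"
      using h q1 eqC[of S "q + 1"] by simp
    ultimately show "C S q \<subseteq> C S (q + 1)" by simp
  qed
  have CW: "CWARP A C"
    unfolding CWARP_def
  proof (intro allI impI notI)
    fix q a b assume h: "2 \<le> q \<and> q \<le> card A \<and> a \<in> A \<and> b \<in> A \<and> revealed_pref A C q a b"
      and h2: "revealed_pref A C q b a"
    obtain S1 where S1: "S1 \<subseteq> A" "S1 \<noteq> {}" "a \<notin> C S1 (q - 1)" "a \<in> C S1 q" "b \<in> S1" "b \<notin> C S1 q"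
      using h unfolding revealed_pref_def by blast
    obtain S2 where S2: "S2 \<subseteq> A" "S2 \<noteq> {}" "b \<notin> C S2 (q - 1)" "b \<in> C S2 q" "a \<in> S2" "a \<notin> C S2 q"
      using h2 unfolding revealed_pref_def by blast
    have 1: "(a, b) \<in> P ! (q - 1)" using lexfor_step[OF fin lf S1(1,2) _ _ S1(3,4) S1(5,6)] h by blast
    have 2: "(b, a) \<in> P ! (q - 1)" using lexfor_step[OF fin lf S2(1,2) _ _ S2(3,4) S2(5,6)] h by blast
    have "q - 1 < length P" using h len by arith
    then have "P ! (q - 1) \<in> set P" by (rule nth_mem)
    then have "antisym (P ! (q - 1))" using po po_facts(4) by blast
    then have "a = b" using 1 2 unfolding antisym_def by blast
    then show False using S1 by blast
  qed
  show ?thesis using CF GS MO CW by blast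
qed



locale ax =
  fixes A :: "'a set" and C :: "'a set \<Rightarrow> nat \<Rightarrow> 'a set"
  assumes fin: "finite A" and ne: "A \<noteq> {}" and cr: "choice_rule A C"
    and cf: "capacity_filling A C" and gs: "gross_substitutes A C"
    and mo: "monotonic A C" and cw: "CWARP A C"
begin

abbreviation "n \<equiv> card A"

lemma C_sub: "S \<subseteq> A \<Longrightarrow> S \<noteq> {} \<Longrightarrow> 1 \<le> q \<Longrightarrow> q \<le> n \<Longrightarrow> C S q \<subseteq> S"
  using cr unfolding choice_rule_def by blast

lemma C_card: "S \<subseteq> A \<Longrightarrow> S \<noteq> {} \<Longrightarrow> 1 \<le> q \<Longrightarrow> q \<le> n \<Longrightarrow> card (C S q) = min (card S) q"
  using cf unfolding capacity_filling_def by blast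

lemma finS: "S \<subseteq> A \<Longrightarrow> finite S"
  using fin finite_subset by blast

lemma C_full: "S \<subseteq> A \<Longrightarrow> S \<noteq> {} \<Longrightarrow> 1 \<le> q \<Longrightarrow> q \<le> n \<Longrightarrow> card S \<le> q \<Longrightarrow> C S q = S"
  using C_sub C_card finS card_subset_eq by (metis min_def)

lemma C_mono: "S \<subseteq> A \<Longrightarrow> S \<noteq> {} \<Longrightarrow> 1 \<le> q \<Longrightarrow> q + 1 \<le> n \<Longrightarrow> C S q \<subseteq> C S (q + 1)"
  using mo unfolding monotonic_def by (metis add_le_imp_le_diff)

lemma hered_aux:
  assumes "1 \<le> q" "q \<le> n"
  shows "\<And>S S'. card (S - S') = m \<Longrightarrow> S \<subseteq> A \<Longrightarrow> S' \<subseteq> S \<Longrightarrow> x \<in> S' \<Longrightarrow> x \<in> C S q \<Longrightarrow> x \<in> C S' q"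
proof (induction m)
  case 0
  then have "S = S'" using finS[of S] by auto
  then show ?case using 0 by simp
next
  case (Suc m)
  then obtain b where b: "b \<in> S" "b \<notin> S'" by (metis card.empty Diff_eq_empty_iff nat.distinct(1) subsetI)
  have xb: "x \<noteq> b" using b Suc.prems by blast
  have "x \<in> C (S - {b}) q"
    using gs Suc.prems b xb assms unfolding gross_substitutes_def by blast
  moreover have "card ((S - {b}) - S') = m"
  proof -
    have "(S - {b}) - S' = (S - S') - {b}" by blast
    moreover have "finite (S - S')" using finS[of S] Suc.prems by simp
    ultimately show ?thesis using Suc.prems b by simp
  qed
  ultimately show ?case using Suc.IH[of "S - {b}" S'] Suc.prems b by blast
qed

lemma hered: "1 \<le> q \<Longrightarrow> q \<le> n \<Longrightarrow> S \<subseteq> A \<Longrightarrow> S' \<subseteq> S \<Longrightarrow> x \<in> S' \<Longrightarrow> x \<in> C S q \<Longrightarrow> x \<in> C S' q"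
  using hered_aux by blast

definition Dq :: "nat \<Rightarrow> 'a set \<Rightarrow> 'a set" where
  "Dq k S = (if k = 0 then {} else C S k)"

lemma D_sub: "S \<subseteq> A \<Longrightarrow> S \<noteq> {} \<Longrightarrow> k \<le> n \<Longrightarrow> Dq k S \<subseteq> S"
  unfolding Dq_def using C_sub by auto

lemma D_card: "S \<subseteq> A \<Longrightarrow> S \<noteq> {} \<Longrightarrow> k \<le> n \<Longrightarrow> card (Dq k S) = min (card S) k"
  unfolding Dq_def using C_card by auto

lemma D_hered: "k \<le> n \<Longrightarrow> S \<subseteq> A \<Longrightarrow> S' \<subseteq> S \<Longrightarrow> x \<in> S' \<Longrightarrow> x \<in> Dq k S \<Longrightarrow> x \<in> Dq k S'"
  unfolding Dq_def using hered by (auto split: if_splits)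

lemma D_C: "S \<subseteq> A \<Longrightarrow> S \<noteq> {} \<Longrightarrow> 1 \<le> q \<Longrightarrow> q \<le> n \<Longrightarrow> Dq (q - 1) S \<subseteq> C S q"
  unfolding Dq_def using C_mono[of S "q - 1"] by auto

lemma D_same:
  assumes "k \<le> n" "S \<subseteq> A" "Dq k S \<subseteq> S'" "S' \<subseteq> S" "k \<le> card S'" "S' \<noteq> {}"
  shows "Dq k S' = Dq k S"
proof -
  have S'A: "S' \<subseteq> A" using assms by blast
  have Sne: "S \<noteq> {}" using assms by blast
  have sub: "Dq k S \<subseteq> Dq k S'"
    using D_hered[OF assms(1,2,4)] assms(3) by blast
  have "card S' \<le> card S" using assms finS card_mono by blast
  then have "card (Dq k S) = k" "card (Dq k S') = k"
    using D_card[OF assms(2) Sne assms(1)] D_card[OF S'A assms(6) assms(1)] assms(5) by auto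
  moreover have "finite (Dq k S')" using D_sub[OF S'A assms(6) assms(1)] finS[OF S'A] finite_subset by blast
  ultimately show ?thesis using sub card_subset_eq by metis
qed

definition rp :: "nat \<Rightarrow> 'a \<Rightarrow> 'a \<Rightarrow> bool" where
  "rp q a b \<longleftrightarrow> (\<exists>S. S \<subseteq> A \<and> a \<in> C S q \<and> a \<notin> Dq (q - 1) S \<and> b \<in> S \<and> b \<notin> C S q)"

lemma rp_basic:
  assumes "rp q a b" "1 \<le> q" "q \<le> n"
  shows "a \<in> A" "b \<in> A" "a \<noteq> b"
proof -
  obtain S where S: "S \<subseteq> A" "a \<in> C S q" "b \<in> S" "b \<notin> C S q"
    using assms unfolding rp_def by blast
  have "C S q \<subseteq> S" using C_sub[OF S(1) _ assms(2,3)] S by blast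
  then show "a \<in> A" "b \<in> A" "a \<noteq> b" using S by auto
qed

lemma rp_asym:
  assumes "rp q a b" "rp q b a" "1 \<le> q" "q \<le> n"
  shows False
proof (cases "q = 1")
  case True
  obtain S1 where S1: "S1 \<subseteq> A" "a \<in> C S1 q" "b \<in> S1" "b \<notin> C S1 q"
    using assms unfolding rp_def by blast
  obtain S2 where S2: "S2 \<subseteq> A" "b \<in> C S2 q" "a \<in> S2" "a \<notin> C S2 q"
    using assms unfolding rp_def by blast
  have ab: "a \<noteq> b" using rp_basic[OF assms(1,3,4)] by simp
  have aS1: "a \<in> S1" using C_sub[OF S1(1) _ assms(3,4)] S1 by blast
  have bS2: "b \<in> S2" using C_sub[OF S2(1) _ assms(3,4)] S2 by blast
  have "a \<in> C {a, b} q" using hered[OF assms(3,4) S1(1), of "{a,b}" a] aS1 S1 by blast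
  moreover have "b \<in> C {a, b} q" using hered[OF assms(3,4) S2(1), of "{a,b}" b] bS2 S2 by blast
  moreover have "{a, b} \<subseteq> A" using aS1 S1 by blast
  ultimately have "C {a, b} q = {a, b}"
    using C_sub[of "{a,b}" q] assms(3,4) by blast
  moreover have "card (C {a, b} q) \<le> 1" using C_card[of "{a,b}" q] assms True \<open>{a, b} \<subseteq> A\<close> by simp
  moreover have "card {a, b} = 2" using ab by simp
  ultimately show False by simp
next
  case False
  have rev: "revealed_pref A C q x y" if rxy: "rp q x y" for x y
  proof -
    obtain S where S: "S \<subseteq> A" "x \<in> C S q" "x \<notin> Dq (q - 1) S" "y \<in> S" "y \<notin> C S q"
      using rxy unfolding rp_def by blast
    have Sne: "S \<noteq> {}" using S by blast
    have "Dq (q - 1) S = C S (q - 1)" using False assms unfolding Dq_def by simp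
    moreover have "Dq (q - 1) S \<subseteq> C S q" using D_C[OF S(1) Sne assms(3,4)] .
    ultimately show ?thesis unfolding revealed_pref_def using S Sne by blast
  qed
  have "2 \<le> q" using False assms by simp
  then show False using cw rev[OF assms(1)] rev[OF assms(2)] rp_basic[OF assms(1,3,4)] assms(4)
    unfolding CWARP_def by blast
qed


lemma rp_trans:
  assumes ab: "rp q a b" and bc: "rp q b c" and q: "1 \<le> q" "q \<le> n"
  shows "rp q a c"
proof -
  define k where "k = q - 1"
  have kn: "k \<le> n" using q k_def by simp
  obtain S1 where S1: "S1 \<subseteq> A" "a \<in> C S1 q" "a \<notin> Dq k S1" "b \<in> S1" "b \<notin> C S1 q"
    using ab unfolding rp_def k_def by blast
  obtain S2 where S2: "S2 \<subseteq> A" "b \<in> C S2 q" "b \<notin> Dq k S2" "c \<in> S2" "c \<notin> C S2 q"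
    using bc unfolding rp_def k_def by blast
  have S1ne: "S1 \<noteq> {}" and S2ne: "S2 \<noteq> {}" using S1 S2 by auto
  have aS1: "a \<in> S1" using C_sub[OF S1(1) S1ne q] S1 by blast
  have neq: "a \<noteq> b" "b \<noteq> c" using rp_basic[OF ab q] rp_basic[OF bc q] by auto
  have ac: "a \<noteq> c"
  proof
    assume "a = c"
    then have "rp q b a" using bc by simp
    then show False using rp_asym[OF ab _ q] by blast
  qed
  define T where "T = S1 \<union> S2"
  have TA: "T \<subseteq> A" and Tne: "T \<noteq> {}" using S1 S2 T_def by auto
  have DC1: "Dq k S1 \<subseteq> C S1 q" using D_C[OF S1(1) S1ne q] k_def by simp
  have DC2: "Dq k S2 \<subseteq> C S2 q" using D_C[OF S2(1) S2ne q] k_def by simp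
  have aT: "a \<notin> Dq k T"
    using D_hered[OF kn TA, of S1 a] aS1 S1 T_def by blast
  have bT: "b \<notin> Dq k T"
    using D_hered[OF kn TA, of S1 b] S1 DC1 T_def by blast
  have cT: "c \<notin> Dq k T"
    using D_hered[OF kn TA, of S2 c] S2 DC2 T_def by blast
  define K where "K = Dq k T"
  have KT: "K \<subseteq> T" using D_sub[OF TA Tne kn] K_def by simp
  have cardS1: "q < card S1"
  proof -
    have "C S1 q \<subset> S1" using C_sub[OF S1(1) S1ne q] S1 by blast
    then have "card (C S1 q) < card S1" using finS[OF S1(1)] psubset_card_mono by blast
    then show ?thesis using C_card[OF S1(1) S1ne q] by simp
  qed
  have "card S1 \<le> card T" using card_mono[OF finS[OF TA], of S1] T_def by blast
  then have cardK: "card K = k" using D_card[OF TA Tne kn] K_def cardS1 k_def by simp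
  define S' where "S' = K \<union> {a, b, c}"
  have S'T: "S' \<subseteq> T" using KT aS1 S1 S2 T_def S'_def by blast
  have S'A: "S' \<subseteq> A" using S'T TA by blast
  have S'ne: "S' \<noteq> {}" using S'_def by blast
  have finK: "finite K" using finS TA KT finite_subset by blast
  have abcK: "a \<notin> K" "b \<notin> K" "c \<notin> K" using aT bT cT K_def by auto
  have cardS': "card S' = k + 3"
  proof -
    have "card {a, b, c} = 3" using neq ac by simp
    moreover have "K \<inter> {a, b, c} = {}" using abcK by blast
    ultimately show ?thesis unfolding S'_def using finK card_Un_disjoint[of K "{a,b,c}"] cardK by simp
  qed
  have DS': "Dq k S' = K"
    using D_same[OF kn TA _ S'T _ S'ne] K_def S'_def cardS' by auto
  define E where "E = C S' q"
  have KE: "K \<subseteq> E" using D_C[OF S'A S'ne q] DS' E_def k_def by simp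
  have ES': "E \<subseteq> S'" using C_sub[OF S'A S'ne q] E_def by simp
  have cardE: "card E = k + 1" using C_card[OF S'A S'ne q] cardS' E_def k_def q by simp
  have finE: "finite E" using finS[OF S'A] ES' finite_subset by blast
  have "card (E - K) = 1" using card_Diff_subset[OF finK KE] cardE cardK by simp
  then obtain x where x: "E - K = {x}" using card_1_singletonE by blast
  have xabc: "x = a \<or> x = b \<or> x = c" using x ES' S'_def by blast
  have memE: "\<And>y. y \<in> {a, b, c} \<Longrightarrow> y \<in> E \<longleftrightarrow> y = x"
    using x abcK by blast
  have rpS': "rp q y z" if "y \<in> {a, b, c}" "z \<in> {a, b, c}" "y = x" "z \<noteq> x" for y z
    unfolding rp_def
  proof (intro exI[of _ S'] conjI)
    show "S' \<subseteq> A" by (rule S'A)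
    show "y \<in> C S' q" using memE that E_def by blast
    show "y \<notin> Dq (q - 1) S'" using DS' k_def that abcK by auto
    show "z \<in> S'" using that S'_def by blast
    show "z \<notin> C S' q" using memE that E_def by blast
  qed
  show ?thesis
  proof (cases "x = a")
    case True
    show ?thesis by (rule rpS'[of a c]) (use True ac in auto)
  next
    case False
    then have "x = b \<or> x = c" using xabc by blast
    then show ?thesis
    proof
      assume "x = b"
      then have "rp q b a" by (intro rpS'[of b a]) (use neq in auto)
      then show ?thesis using rp_asym[OF ab _ q] by blast
    next
      assume "x = c"
      then have "rp q c b" by (intro rpS'[of c b]) (use neq in auto)
      then show ?thesis using rp_asym[OF bc _ q] by blast
    qed
  qed
qed

end


context ax
begin

definition h :: "nat \<Rightarrow> 'a \<Rightarrow> nat" where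
  "h q a = card {b \<in> A. rp q b a}"

lemma h_less:
  assumes ab: "rp q a b" and q: "1 \<le> q" "q \<le> n"
  shows "h q a < h q b"
proof -
  have "{c \<in> A. rp q c a} \<subseteq> {c \<in> A. rp q c b}" using rp_trans[OF _ ab q] by blast
  moreover have "a \<in> {c \<in> A. rp q c b}" using ab rp_basic[OF ab q] by blast
  moreover have "a \<notin> {c \<in> A. rp q c a}" using rp_basic(3)[of q a a] q by blast
  ultimately have "{c \<in> A. rp q c a} \<subset> {c \<in> A. rp q c b}" by blast
  moreover have "finite {c \<in> A. rp q c b}" using fin by simp
  ultimately show ?thesis unfolding h_def by (rule psubset_card_mono[rotated])
qed

definition fA :: "'a \<Rightarrow> nat" where
  "fA = (SOME f. inj_on f A \<and> f ` A = {i. i < n})"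

lemma fA_props: "inj_on fA A" "\<And>a. a \<in> A \<Longrightarrow> fA a < n"
proof -
  obtain f m where fm: "f ` A = {i::nat. i < m}" "inj_on f A"
    using finite_imp_inj_to_nat_seg[OF fin] by blast
  have "card (f ` A) = n" using card_image[OF fm(2)] .
  then have "m = n" using fm(1) by simp
  then have ex: "\<exists>f. inj_on f A \<and> f ` A = {i. i < n}" using fm by blast
  have "inj_on fA A \<and> fA ` A = {i. i < n}" unfolding fA_def by (rule someI_ex[OF ex])
  then show "inj_on fA A" "\<And>a. a \<in> A \<Longrightarrow> fA a < n" by auto
qed

definition key :: "nat \<Rightarrow> 'a \<Rightarrow> nat" where
  "key q a = h q a * n + fA a"

lemma key_inj:
  assumes "a \<in> A" "b \<in> A" "key q a = key q b"
  shows "a = b"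
proof -
  have "key q a mod n = fA a" using fA_props(2)[OF assms(1)] unfolding key_def by simp
  moreover have "key q b mod n = fA b" using fA_props(2)[OF assms(2)] unfolding key_def by simp
  ultimately have "fA a = fA b" using assms(3) by simp
  then show ?thesis using fA_props(1) assms inj_on_def by metis
qed

definition R :: "nat \<Rightarrow> 'a rel" where
  "R q = {(a, b). a \<in> A \<and> b \<in> A \<and> key q a \<le> key q b}"

lemma po_R: "priority_ordering A (R q)"
  unfolding priority_ordering_def linear_order_on_def partial_order_on_def preorder_on_def
proof (intro conjI)
  show "R q \<subseteq> A \<times> A" unfolding R_def by auto
  show "R q \<subseteq> A \<times> A" unfolding R_def by auto
  show "refl_on A (R q)" unfolding R_def refl_on_def by auto
  show "trans (R q)" unfolding R_def trans_def by auto
  show "antisym (R q)" unfolding R_def antisym_def using key_inj by auto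
  show "total_on A (R q)" unfolding R_def total_on_def by auto
qed

lemma rp_R:
  assumes ab: "rp q a b" and q: "1 \<le> q" "q \<le> n"
  shows "(a, b) \<in> R q"
proof -
  have hl: "h q a + 1 \<le> h q b" using h_less[OF ab q] by simp
  have aA: "a \<in> A" and bA: "b \<in> A" using rp_basic[OF ab q] by auto
  have "key q a < h q a * n + n" using fA_props(2)[OF aA] unfolding key_def by simp
  also have "h q a * n + n = (h q a + 1) * n" by simp
  also have "\<dots> \<le> h q b * n" using hl by (rule mult_le_mono1)
  also have "\<dots> \<le> key q b" unfolding key_def by simp
  finally show ?thesis unfolding R_def using aA bA by simp
qed

lemma main:
  assumes "q \<le> n"
  shows "\<And>S. S \<subseteq> A \<Longrightarrow> S \<noteq> {} \<Longrightarrow> lex_pick (map R [1..<q+1]) S = Dq q S"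
  using assms
proof (induction q)
  case 0
  then show ?case unfolding Dq_def by simp
next
  case (Suc q)
  define Q where "Q = Suc q"
  have Q: "1 \<le> Q" "Q \<le> n" using Suc.prems Q_def by auto
  define L where "L = Dq q S"
  have IH: "lex_pick (map R [1..<q+1]) S = L" using Suc L_def by simp
  have ml: "map R [1..<Suc q + 1] = map R [1..<q+1] @ [R Q]" unfolding Q_def by simp
  have lp: "lex_pick (map R [1..<Suc q + 1]) S = L \<union> (if S - L = {} then {} else {top_of (R Q) (S - L)})"
    unfolding ml lex_pick_snoc IH ..
  have DQ: "Dq (Suc q) S = C S Q" unfolding Dq_def Q_def by simp
  have finS': "finite S" using finS Suc.prems by blast
  have qn: "q \<le> n" using Q Q_def by simp
  have LS: "L \<subseteq> S" using D_sub[OF Suc.prems(1,2) qn] L_def by simp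
  have cardL: "card L = min (card S) q" using D_card[OF Suc.prems(1,2) qn] L_def by simp
  have LC: "L \<subseteq> C S Q" using D_C[OF Suc.prems(1,2) Q] L_def Q_def by simp
  have CS: "C S Q \<subseteq> S" using C_sub[OF Suc.prems(1,2) Q] .
  have cardC: "card (C S Q) = min (card S) Q" using C_card[OF Suc.prems(1,2) Q] .
  show ?case
  proof (cases "card S \<le> q")
    case True
    have "L = S" using LS cardL True finS' card_subset_eq by (metis min_absorb1)
    moreover have "C S Q = S" using C_full[OF Suc.prems(1,2) Q] True Q_def by simp
    ultimately show ?thesis using lp DQ by simp
  next
    case False
    then have cL: "card L = q" and cC: "card (C S Q) = Suc q" using cardL cardC Q_def by auto
    have finL: "finite L" using finS' LS finite_subset by blast
    have "card (C S Q - L) = 1" using card_Diff_subset[OF finL LC] cL cC by simp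
    then obtain x where x: "C S Q - L = {x}" using card_1_singletonE by blast
    have CSQ: "C S Q = L \<union> {x}" using x LC by blast
    have xSL: "x \<in> S - L" using x CS by blast
    have xA: "x \<in> A" using xSL Suc.prems by blast
    have top: "top_of (R Q) (S - L) = x"
    proof (rule top_unique[OF po_R])
      show "S - L \<subseteq> A" using Suc.prems by blast
      show "x \<in> S - L" by (rule xSL)
      show "\<forall>b\<in>S - L. (x, b) \<in> R Q"
      proof
        fix y assume y: "y \<in> S - L"
        show "(x, y) \<in> R Q"
        proof (cases "y = x")
          case True
          then show ?thesis using xA unfolding R_def by simp
        next
          case False
          have "rp Q x y" unfolding rp_def
          proof (intro exI[of _ S] conjI)
            show "S \<subseteq> A" by (rule Suc.prems(1))
            show "x \<in> C S Q" using CSQ by blast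
            show "x \<notin> Dq (Q - 1) S" using xSL L_def Q_def by simp
            show "y \<in> S" using y by blast
            show "y \<notin> C S Q" using CSQ y False by blast
          qed
          then show ?thesis using rp_R Q by blast
        qed
      qed
    qed
    have "S - L \<noteq> {}" using xSL by blast
    then show ?thesis using lp DQ CSQ top by simp
  qed
qed

lemma is_lex: "lexicographic A C"
  unfolding lexicographic_def lexicographic_for_def
proof (intro exI[of _ "map R [1..<n+1]"] conjI allI impI)
  show "length (map R [1..<n+1]) = n" by simp
  show "\<forall>r\<in>set (map R [1..<n+1]). priority_ordering A r" using po_R by auto
  fix S q assume h: "S \<subseteq> A \<and> S \<noteq> {} \<and> 1 \<le> q \<and> q \<le> n"
  have t1: "take q [1..<n+1] = [1..<1+q]" using h by (intro take_upt) simp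
  have "take q (map R [1..<n+1]) = map R [1..<q+1]"
    unfolding take_map t1 by (simp add: add.commute)
  then show "C S q = lex_pick (take q (map R [1..<n+1])) S"
    using main[of q S] h unfolding Dq_def by simp
qed

end


theorem corollary1:
  fixes A :: "'a set" and C :: "'a set \<Rightarrow> nat \<Rightarrow> 'a set"
  assumes "finite A" and "A \<noteq> {}" and "choice_rule A C"
  shows "lexicographic A C \<longleftrightarrow>
           capacity_filling A C \<and> gross_substitutes A C \<and> monotonic A C \<and> CWARP A C"
proof
  assume "lexicographic A C"
  then obtain P where "lexicographic_for A C P" unfolding lexicographic_def by blast
  then show "capacity_filling A C \<and> gross_substitutes A C \<and> monotonic A C \<and> CWARP A C"
    using lex_imp_axioms assms by blast
next
  assume H: "capacity_filling A C \<and> gross_substitutes A C \<and> monotonic A C \<and> CWARP A C"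
  interpret ax A C using assms H by unfold_locales auto
  show "lexicographic A C" by (rule is_lex)
qed

end
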